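(* Let $d\geq 2$. If $\rho=\sum_{0\le i\le j<d}p_{ij}\ket{D_{ij}}\bra{D_{ij}}$ is an extremal point of the convex set of separable diagonal symmetric states on $\mathbb{C}^d\otimes\mathbb{C}^d$, then $p_{ij}=2\sqrt{p_{ii}p_{jj}}$ for all $0\le i<j<d$.
   Context: Let $\{\ket{0},\dots,\ket{d-1}\}$ be the computational basis of $\mathbb{C}^d$. Define $\ket{D_{ii}}=\ket{ii}$ and, for $i<j$, $\ket{D_{ij}}=(\ket{ij}+\ket{ji})/\sqrt{2}$. A state $\rho$ on $\mathbb{C}^d\otimes\mathbb{C}^d$ is diagonal symmetric (DS) if $\rho=\sum_{0\le i\le j<d}p_{ij}\ket{D_{ij}}\bra{D_{ij}}$ with $p_{ij}\ge 0$ and $\sum_{i\le j}p_{ij}=1$. A state is separable if it is a convex combination of product states $\rho^A\otimes\rho^B$. An extremal point of a convex set is an element that cannot be written as a nontrivial convex combination of two other elements of the set. *)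

theory Defs
  imports Complex_Main
begin

text \<open>Operators on a finite-dimensional Hilbert space with orthonormal basis indexed by
  a finite set I are represented as kernels 'a \<Rightarrow> 'a \<Rightarrow> complex (matrix entries),
  required to vanish outside I \<times> I.  For C^d we take I = {..<d}; for C^d \<otimes> C^d
  we take I = {..<d} \<times> {..<d}, with basis vector (i,k) standing for |ik>.\<close>

definition density_on :: "'a set \<Rightarrow> ('a \<Rightarrow> 'a \<Rightarrow> complex) \<Rightarrow> bool" where
  "density_on I A \<longleftrightarrow>
     (\<forall>x y. (x \<notin> I \<or> y \<notin> I) \<longrightarrow> A x y = 0) \<and>
     (\<forall>x\<in>I. \<forall>y\<in>I. A x y = cnj (A y x)) \<and>
     (\<forall>v :: 'a \<Rightarrow> complex. 0 \<le> Re (\<Sum>x\<in>I. \<Sum>y\<in>I. cnj (v x) * A x y * v y)) \<and>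
     (\<Sum>x\<in>I. A x x) = 1"

definition tensor_op ::
  "(nat \<Rightarrow> nat \<Rightarrow> complex) \<Rightarrow> (nat \<Rightarrow> nat \<Rightarrow> complex) \<Rightarrow> (nat \<times> nat) \<Rightarrow> (nat \<times> nat) \<Rightarrow> complex" where
  "tensor_op A B = (\<lambda>(i, k) (j, l). A i j * B k l)"

definition separable :: "nat \<Rightarrow> ((nat \<times> nat) \<Rightarrow> (nat \<times> nat) \<Rightarrow> complex) \<Rightarrow> bool" where
  "separable d \<rho> \<longleftrightarrow>
     (\<exists>(n::nat) (q :: nat \<Rightarrow> real) A B.
        (\<forall>m<n. 0 \<le> q m \<and> density_on {..<d} (A m) \<and> density_on {..<d} (B m)) \<and>
        (\<Sum>m<n. q m) = 1 \<and>
        \<rho> = (\<lambda>x y. \<Sum>m<n. complex_of_real (q m) * tensor_op (A m) (B m) x y))"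

definition ket_D :: "nat \<Rightarrow> nat \<Rightarrow> (nat \<times> nat) \<Rightarrow> complex" where
  "ket_D i j = (\<lambda>x. if i = j then (if x = (i, i) then 1 else 0)
                   else (if x = (i, j) \<or> x = (j, i) then complex_of_real (1 / sqrt 2) else 0))"

definition DS_pairs :: "nat \<Rightarrow> (nat \<times> nat) set" where
  "DS_pairs d = {(i, j). i \<le> j \<and> j < d}"

definition DS_op :: "nat \<Rightarrow> (nat \<Rightarrow> nat \<Rightarrow> real) \<Rightarrow> (nat \<times> nat) \<Rightarrow> (nat \<times> nat) \<Rightarrow> complex" where
  "DS_op d p = (\<lambda>x y. \<Sum>(i, j)\<in>DS_pairs d. complex_of_real (p i j) * ket_D i j x * cnj (ket_D i j y))"

definition DS_coeffs :: "nat \<Rightarrow> (nat \<Rightarrow> nat \<Rightarrow> real) \<Rightarrow> bool" where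
  "DS_coeffs d p \<longleftrightarrow> (\<forall>(i, j)\<in>DS_pairs d. 0 \<le> p i j) \<and> (\<Sum>(i, j)\<in>DS_pairs d. p i j) = 1"

definition diag_symmetric :: "nat \<Rightarrow> ((nat \<times> nat) \<Rightarrow> (nat \<times> nat) \<Rightarrow> complex) \<Rightarrow> bool" where
  "diag_symmetric d \<rho> \<longleftrightarrow> (\<exists>p. DS_coeffs d p \<and> \<rho> = DS_op d p)"

definition sep_DS_states :: "nat \<Rightarrow> ((nat \<times> nat) \<Rightarrow> (nat \<times> nat) \<Rightarrow> complex) set" where
  "sep_DS_states d = {\<rho>. separable d \<rho> \<and> diag_symmetric d \<rho>}"

definition extremal_in :: "('a \<Rightarrow> 'a \<Rightarrow> complex) set \<Rightarrow> ('a \<Rightarrow> 'a \<Rightarrow> complex) \<Rightarrow> bool" where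
  "extremal_in S \<rho> \<longleftrightarrow> \<rho> \<in> S \<and>
     (\<forall>a\<in>S. \<forall>b\<in>S. \<forall>t::real. 0 < t \<and> t < 1 \<and>
        \<rho> = (\<lambda>x y. complex_of_real t * a x y + complex_of_real (1 - t) * b x y)
        \<longrightarrow> a = b)"

end

theory Submission
  imports Defs
begin


lemma aux: "i \<le> j \<Longrightarrow> (if i = j then (if (k, l) = (i, i) then 1 else 0)
                   else (if (k, l) = (i, j) \<or> (k, l) = ((j::nat), i) then c else 0)) =
   (if (i, j) = (min k l, max k l) then (if k = l then 1 else c) else (0::complex))"
proof -
  assume a: "i \<le> j"
  show ?thesis
  proof (cases "i = j")
    case True
    have 1: "((k, l) = (i, i)) = ((i, j) = (min k l, max k l))" using True by (auto simp: min_def max_def)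
    show ?thesis
    proof (cases "(k, l) = (i, i)")
      case T: True
      have A: "(i, j) = (min k l, max k l)" using 1 T by blast
      have B: "k = l" using T by simp
      show ?thesis by (subst if_P[OF True], subst if_P[OF T], subst if_P[OF A], subst if_P[OF B], rule refl)
    next
      case F: False
      have A: "(i, j) \<noteq> (min k l, max k l)" using 1 F by blast
      show ?thesis by (subst if_P[OF True], subst if_not_P[OF F], subst if_not_P[OF A], rule refl)
    qed
  next
    case False
    have 1: "((k, l) = (i, j) \<or> (k, l) = (j, i)) = ((i, j) = (min k l, max k l))"
      using False a by (auto simp: min_def max_def)
    show ?thesis
    proof (cases "(i, j) = (min k l, max k l)")
      case T: True
      have A: "(k, l) = (i, j) \<or> (k, l) = (j, i)" using 1 T by blast
      have B: "k \<noteq> l" using T False by auto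
      show ?thesis by (subst if_not_P[OF False], subst if_P[OF A], subst if_P[OF T], subst if_not_P[OF B], rule refl)
    next
      case F: False
      have A: "\<not> ((k, l) = (i, j) \<or> (k, l) = (j, i))" using 1 F by blast
      show ?thesis by (subst if_not_P[OF False], subst if_not_P[OF A], subst if_not_P[OF F], rule refl)
    qed
  qed
qed

lemma ket_D_gen: "ket_D i j (k, l) = (let c = complex_of_real (1 / sqrt 2) in
   (if i = j then (if (k, l) = (i, i) then 1 else 0)
                   else (if (k, l) = (i, j) \<or> (k, l) = (j, i) then c else 0)))"
  unfolding ket_D_def Let_def by (rule refl)

lemma ket_D_alt:
  assumes "i \<le> j"
  shows "ket_D i j (k, l) = (if (i, j) = (min k l, max k l) then
            (if k = l then 1 else complex_of_real (1 / sqrt 2)) else 0)"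
  unfolding ket_D_gen Let_def by (rule aux[OF assms])

definition peq :: "nat \<Rightarrow> nat \<Rightarrow> nat \<Rightarrow> nat \<Rightarrow> bool" where
  "peq k l r s \<longleftrightarrow> (k = r \<and> l = s) \<or> (k = s \<and> l = r)"

lemma minmax_peq: "((min k l, max k l) = (min r s, max (r::nat) s)) \<longleftrightarrow> peq k l r s"
  unfolding peq_def min_def max_def by auto

lemma finite_DS_pairs: "finite (DS_pairs d)"
proof -
  have "DS_pairs d \<subseteq> {..<d} \<times> {..<d}" by (auto simp: DS_pairs_def)
  then show ?thesis by (rule finite_subset) simp
qed

lemma DS_entry:
  "DS_op d p (k, l) (r, s) =
    (if k < d \<and> l < d \<and> peq k l r s then
       complex_of_real (if k = l then p k k else p (min k l) (max k l) / 2) else 0)"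
proof -
  let ?mn = "min k l" and ?mx = "max k l"
  define c where "c = (if k = l then 1 else complex_of_real (1 / sqrt 2))"
  define g where "g = complex_of_real (p ?mn ?mx) * c * cnj (ket_D ?mn ?mx (r, s))"
  have "DS_op d p (k, l) (r, s) = (\<Sum>ij\<in>DS_pairs d. if ij = (?mn, ?mx) then g else 0)"
    unfolding DS_op_def
  proof (rule sum.cong[OF refl])
    fix x assume "x \<in> DS_pairs d"
    then obtain i j where x: "x = (i, j)" "i \<le> j" by (auto simp: DS_pairs_def)
    show "(case x of (i, j) \<Rightarrow> complex_of_real (p i j) * ket_D i j (k, l) * cnj (ket_D i j (r, s))) =
          (if x = (?mn, ?mx) then g else 0)"
    proof (cases "x = (?mn, ?mx)")
      case True
      then show ?thesis using x unfolding g_def c_def by (simp only: ket_D_alt if_True split simp_thms)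
    next
      case False
      have ne: "(i, j) \<noteq> (min k l, max k l)" using False x by simp
      have "ket_D i j (k, l) = 0" by (subst ket_D_alt[OF x(2)], subst if_not_P[OF ne], rule refl)
      then show ?thesis using x ne by auto
    qed
  qed
  also have "\<dots> = (if (?mn, ?mx) \<in> DS_pairs d then g else 0)"
    by (rule sum.delta[OF finite_DS_pairs])
  also have "\<dots> = (if k < d \<and> l < d \<and> peq k l r s then
       complex_of_real (if k = l then p k k else p (min k l) (max k l) / 2) else 0)"
  proof -
    have s2: "complex_of_real (1 / sqrt 2) * cnj (complex_of_real (1 / sqrt 2)) = 1/2"
      by (simp flip: of_real_mult) 
    have mem: "(?mn, ?mx) \<in> DS_pairs d \<longleftrightarrow> k < d \<and> l < d"
      by (auto simp: DS_pairs_def)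
    have gv: "g = (if peq k l r s then complex_of_real (if k = l then p k k else p (min k l) (max k l) / 2) else 0)"
    proof (cases "peq k l r s")
      case True
      then have "(min k l, max k l) = (min r s, max r s)" using minmax_peq by blast
      then have kk: "ket_D ?mn ?mx (r, s) = c" unfolding c_def using True
        by (subst ket_D_alt) (auto simp: peq_def)
      show ?thesis
      proof (cases "k = l")
        case True
        then show ?thesis using \<open>peq k l r s\<close> unfolding g_def kk c_def by simp
      next
        case False
        then show ?thesis using \<open>peq k l r s\<close> s2 unfolding g_def kk c_def by simp
      qed
    next
      case False
      then have "(min k l, max k l) \<noteq> (min r s, max r s)" using minmax_peq by blast
      then have "ket_D ?mn ?mx (r, s) = 0" by (subst ket_D_alt) auto
      then show ?thesis using False unfolding g_def by simp
    qed
    show ?thesis using mem gv by simp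
  qed
  finally show ?thesis .
qed



lemma root_sum:
  fixes N a b :: nat
  assumes N: "N > 0" and a: "a < N" and b: "b < N"
  defines "z \<equiv> cis (2 * pi / real N)"
  shows "(\<Sum>t<N. z ^ (t * a) * cnj (z ^ (t * b))) = (if a = b then of_nat N else 0)"
proof -
  have za: "z ^ m = cis (2 * pi * real m / real N)" for m
    unfolding z_def DeMoivre by (simp add: field_simps)
  have nz: "norm (z ^ m) = 1" for m unfolding za by simp
  have cnjz: "cnj (z ^ m) = inverse (z ^ m)" for m
  proof -
    have "z ^ m * cnj (z ^ m) = 1" using complex_norm_square[of "z ^ m"] nz[of m] by simp
    then show ?thesis by (rule inverse_unique[symmetric])
  qed
  have z0: "z \<noteq> 0" unfolding z_def by simp
  define w where "w = z ^ a * cnj (z ^ b)"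
  have trm: "z ^ (t * a) * cnj (z ^ (t * b)) = w ^ t" for t
    unfolding w_def by (simp add: power_mult mult.commute[of t] power_mult_distrib)
  show ?thesis
  proof (cases "a = b")
    case True
    have "w = 1" unfolding w_def True using cnjz[of b] nz[of b] z0
      by (simp add: field_simps)
    then have "(\<Sum>t<N. z ^ (t * a) * cnj (z ^ (t * b))) = (\<Sum>t<N. 1)" by (simp only: trm power_one)
    then show ?thesis using True by simp
  next
    case False
    have inj: "inj_on (\<lambda>k. cis (2 * pi * real k / real N)) {..<N}"
      using bij_betw_roots_unity[OF N] by (simp add: bij_betw_def)
    have "z ^ a \<noteq> z ^ b" unfolding za using inj a b False by (auto dest: inj_onD)
    then have w1: "w \<noteq> 1" unfolding w_def cnjz
      using z0 by (simp add: field_simps)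
    have zN: "(z ^ m) ^ N = 1" for m
    proof -
      have "(z ^ m) ^ N = cis (2 * pi) ^ m"
        unfolding z_def DeMoivre using N by (simp add: field_simps flip: power_mult)
      then show ?thesis by simp
    qed
    have wN: "w ^ N = 1" unfolding w_def cnjz
      by (simp add: power_mult_distrib zN power_inverse)
    have "(\<Sum>t<N. w ^ t) = 0" using geometric_sum[OF w1, of N] wN by simp
    moreover have "(\<Sum>t<N. z ^ (t * a) * cnj (z ^ (t * b))) = (\<Sum>t<N. w ^ t)" by (simp only: trm)
    ultimately show ?thesis using False by simp
  qed
qed

lemma pow3_ord:
  fixes k l r s :: nat
  assumes "k \<le> l" "r \<le> s" "3 ^ k + 3 ^ l = (3::nat) ^ r + 3 ^ s"
  shows "k = r \<and> l = s"
proof -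
  have key: "False" if kl: "k' \<le> l'" and rs: "r' \<le> s'" and lt: "k' < r'" and
     eq: "3 ^ k' + 3 ^ l' = (3::nat) ^ r' + 3 ^ s'" for k' l' r' s' :: nat
  proof -
    have "(3::nat) ^ (k' + 1) dvd 3 ^ r'" by (rule le_imp_power_dvd) (use lt in simp)
    moreover have "(3::nat) ^ (k' + 1) dvd 3 ^ s'" by (rule le_imp_power_dvd) (use lt rs in simp)
    ultimately have "(3::nat) ^ (k' + 1) dvd 3 ^ k' + 3 ^ l'" using eq by simp
    moreover have "(3::nat) ^ k' + 3 ^ l' = 3 ^ k' * (1 + 3 ^ (l' - k'))"
      using kl by (simp add: algebra_simps flip: power_add)
    ultimately have "3 ^ k' * 3 dvd (3::nat) ^ k' * (1 + 3 ^ (l' - k'))" by (metis mult.commute power_Suc Suc_eq_plus1)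
    then have d: "(3::nat) dvd 1 + 3 ^ (l' - k')" using nat_mult_dvd_cancel_disj[of "3 ^ k'" 3 "1 + 3 ^ (l' - k')"] by simp
    show False
    proof (cases "l' = k'")
      case True then have "1 + 3 ^ (l' - k') = (2::nat)" by simp
      then have "(3::nat) dvd 2" using d by metis
      then show False using nat_dvd_not_less[of 2 3] by simp
    next
      case False
      then have e: "(3::nat) dvd 3 ^ (l' - k')" using kl by simp
      have "(3::nat) dvd 3 ^ (l' - k') + 1" using d by (simp only: add.commute)
      then have "(3::nat) dvd 1" using dvd_add_right_iff[OF e] by blast
      then show False by simp
    qed
  qed
  have "\<not> k < r" using key[of k l r s] assms by blast
  moreover have "\<not> r < k" using key[of r s k l] assms by metis
  ultimately have "k = r" by simp
  then have "(3::nat) ^ l = 3 ^ s" using assms(3) by simp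
  then show ?thesis using \<open>k = r\<close> by simp
qed

lemma pow3_peq:
  fixes k l r s :: nat
  assumes "3 ^ k + 3 ^ l = (3::nat) ^ r + 3 ^ s"
  shows "(k = r \<and> l = s) \<or> (k = s \<and> l = r)"
proof -
  have A: "3 ^ min k l + 3 ^ max k l = (3::nat) ^ min r s + 3 ^ max r s"
    using assms by (simp add: min_def max_def add.commute)
  have "min k l = min r s \<and> max k l = max r s" by (rule pow3_ord[OF _ _ A]) simp_all
  then show ?thesis by (auto simp: min_def max_def split: if_splits)
qed



lemma sum2:
  assumes "finite I" "k \<in> I" "l \<in> I" "k \<noteq> l" "\<And>y. y \<in> I \<Longrightarrow> y \<noteq> k \<Longrightarrow> y \<noteq> l \<Longrightarrow> g y = 0"
  shows "(\<Sum>y\<in>I. g y) = g k + (g l :: complex)"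
proof -
  have "(\<Sum>y\<in>I. g y) = (\<Sum>y\<in>{k, l}. g y)"
    by (rule sum.mono_neutral_right) (use assms in auto)
  then show ?thesis using assms(4) by simp
qed

lemma sum1:
  assumes "finite I" "k \<in> I" "\<And>y. y \<in> I \<Longrightarrow> y \<noteq> k \<Longrightarrow> g y = 0"
  shows "(\<Sum>y\<in>I. g y) = (g k :: complex)"
proof -
  have "(\<Sum>y\<in>I. g y) = (\<Sum>y\<in>{k}. g y)"
    by (rule sum.mono_neutral_right) (use assms in auto)
  then show ?thesis by simp
qed

lemma dens_psd:
  assumes "density_on I A" "finite I"
  shows "0 \<le> Re (\<Sum>x\<in>I. \<Sum>y\<in>I. cnj (v x) * A x y * v y)"
  using assms unfolding density_on_def by blast

lemma dens_herm:
  assumes "density_on I A" "k \<in> I" "l \<in> I"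
  shows "A k l = cnj (A l k)"
  using assms unfolding density_on_def by blast

lemma dens_out:
  assumes "density_on I A" "k \<notin> I \<or> l \<notin> I"
  shows "A k l = 0"
  using assms unfolding density_on_def by blast

lemma dens_diag:
  assumes "density_on I A" "finite I" "k \<in> I"
  shows "A k k = complex_of_real (Re (A k k))" "0 \<le> Re (A k k)"
proof -
  have "A k k = cnj (A k k)" using dens_herm[OF assms(1,3,3)] .
  then have "Im (A k k) = 0" by (metis cnj.simps(2) neg_equal_zero)
  then show "A k k = complex_of_real (Re (A k k))" by (simp add: complex_eq_iff)
  define v where "v = (\<lambda>x. if x = k then (1::complex) else 0)"
  have "(\<Sum>x\<in>I. \<Sum>y\<in>I. cnj (v x) * A x y * v y) = (\<Sum>y\<in>I. cnj (v k) * A k y * v y)"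
    by (rule sum1) (use assms in \<open>auto simp: v_def\<close>)
  also have "\<dots> = cnj (v k) * A k k * v k"
    by (rule sum1) (use assms in \<open>auto simp: v_def\<close>)
  finally show "0 \<le> Re (A k k)" using dens_psd[OF assms(1,2), of v] by (simp add: v_def)
qed

lemma dens_trace:
  assumes "density_on I A" "finite I"
  shows "(\<Sum>x\<in>I. Re (A x x)) = 1"
proof -
  have "(\<Sum>x\<in>I. A x x) = 1" using assms(1) unfolding density_on_def by blast
  then have "Re (\<Sum>x\<in>I. A x x) = 1" by simp
  then show ?thesis by (simp add: Re_sum)
qed

lemma dens_quad2:
  assumes "density_on I A" "finite I" "k \<in> I" "l \<in> I" "k \<noteq> l"
  shows "0 \<le> Re (cnj \<alpha> * A k k * \<alpha> + cnj \<alpha> * A k l * \<beta> + cnj \<beta> * A l k * \<alpha> + cnj \<beta> * A l l * \<beta>)"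
proof -
  define v where "v = (\<lambda>x. if x = k then \<alpha> else if x = l then \<beta> else 0)"
  have "(\<Sum>x\<in>I. \<Sum>y\<in>I. cnj (v x) * A x y * v y) =
        (\<Sum>y\<in>I. cnj (v k) * A k y * v y) + (\<Sum>y\<in>I. cnj (v l) * A l y * v y)"
    by (rule sum2) (use assms in \<open>auto simp: v_def\<close>)
  also have "(\<Sum>y\<in>I. cnj (v k) * A k y * v y) = cnj (v k) * A k k * v k + cnj (v k) * A k l * v l"
    by (rule sum2) (use assms in \<open>auto simp: v_def\<close>)
  also have "(\<Sum>y\<in>I. cnj (v l) * A l y * v y) = cnj (v l) * A l k * v k + cnj (v l) * A l l * v l"
    by (rule sum2) (use assms in \<open>auto simp: v_def\<close>)
  finally show ?thesis using dens_psd[OF assms(1,2), of v] assms(5) by (simp add: v_def add.assoc)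
qed

lemma dens_offdiag:
  assumes "density_on I A" "finite I" "k \<in> I" "l \<in> I"
  shows "(cmod (A k l))\<^sup>2 \<le> Re (A k k) * Re (A l l)"
proof (cases "k = l")
  case True
  then have "A k k = complex_of_real (Re (A k k))" using dens_diag[OF assms(1,2,3)] by simp
  then have "cmod (A k k) = \<bar>Re (A k k)\<bar>" by (metis norm_of_real)
  then show ?thesis using True by (simp add: power2_eq_square)
next
  case False
  define a where "a = Re (A k k)"
  define b where "b = Re (A l l)"
  define c where "c = A k l"
  define m where "m = (cmod c)\<^sup>2"
  have Ak: "A k k = complex_of_real a" unfolding a_def using dens_diag[OF assms(1,2,3)] by simp
  have Al: "A l l = complex_of_real b" unfolding b_def using dens_diag[OF assms(1,2,4)] by simp
  have Alk: "A l k = cnj c" unfolding c_def using dens_herm[OF assms(1,4,3)] by simp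
  have a0: "0 \<le> a" unfolding a_def using dens_diag[OF assms(1,2,3)] by simp
  have b0: "0 \<le> b" unfolding b_def using dens_diag[OF assms(1,2,4)] by simp
  have ccnj: "c * cnj c = complex_of_real m" unfolding m_def using complex_norm_square[of c] by simp
  have Q: "0 \<le> a * x\<^sup>2 - 2 * x * y * m + b * y\<^sup>2 * m" for x y :: real
  proof -
    have "0 \<le> Re (cnj (complex_of_real x) * A k k * complex_of_real x + cnj (complex_of_real x) * A k l * (- cnj c * complex_of_real y) +
       cnj (- cnj c * complex_of_real y) * A l k * complex_of_real x + cnj (- cnj c * complex_of_real y) * A l l * (- cnj c * complex_of_real y))"
      by (rule dens_quad2[OF assms False])
    also have "cnj (complex_of_real x) * A k k * complex_of_real x + cnj (complex_of_real x) * A k l * (- cnj c * complex_of_real y) +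
       cnj (- cnj c * complex_of_real y) * A l k * complex_of_real x + cnj (- cnj c * complex_of_real y) * A l l * (- cnj c * complex_of_real y)
       = complex_of_real (a * x\<^sup>2) - 2 * complex_of_real x * complex_of_real y * (c * cnj c) + complex_of_real b * complex_of_real (y\<^sup>2) * (c * cnj c)"
      unfolding Ak Al Alk c_def[symmetric] by (simp add: algebra_simps power2_eq_square)
    also have "\<dots> = complex_of_real (a * x\<^sup>2 - 2 * x * y * m + b * y\<^sup>2 * m)"
      unfolding ccnj by simp
    finally show ?thesis by simp
  qed
  have "m \<le> a * b"
  proof (cases "b = 0")
    case False
    then have "b > 0" using b0 by simp
    have "0 \<le> a * b\<^sup>2 - 2 * b * 1 * m + b * 1\<^sup>2 * m" using Q[of b 1] .
    then have "0 \<le> b * (a * b - m)" by (simp add: algebra_simps power2_eq_square)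
    then show ?thesis using \<open>b > 0\<close> by (simp add: zero_le_mult_iff)
  next
    case True
    have m0: "0 \<le> m" unfolding m_def by simp
    show ?thesis
    proof (rule ccontr)
      assume "\<not> m \<le> a * b"
      then have "m > 0" using True by simp
      have "0 \<le> a * 1\<^sup>2 - 2 * 1 * ((a + 1) / m) * m + b * ((a + 1) / m)\<^sup>2 * m" using Q[of 1 "(a+1)/m"] .
      then show False using True \<open>m > 0\<close> a0 by simp
    qed
  qed
  then show ?thesis unfolding m_def c_def a_def b_def .
qed





definition ycoef :: "(nat \<Rightarrow> real) \<Rightarrow> nat \<Rightarrow> nat \<Rightarrow> real" where
  "ycoef y i j = (if i = j then (y i)\<^sup>2 else 2 * y i * y j)"

definition Eop :: "nat \<Rightarrow> (nat \<Rightarrow> real) \<Rightarrow> (nat \<times> nat) \<Rightarrow> (nat \<times> nat) \<Rightarrow> complex" where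
  "Eop d y = (\<lambda>(k, l) (r, s). if k < d \<and> l < d \<and> peq k l r s then complex_of_real (y k * y l) else 0)"

lemma Eop_DS: "Eop d y = DS_op d (ycoef y)"
proof (intro ext)
  fix x x' :: "nat \<times> nat"
  obtain k l where x: "x = (k, l)" by (cases x)
  obtain r s where x': "x' = (r, s)" by (cases x')
  have "(if k = l then ycoef y k k else ycoef y (min k l) (max k l) / 2) = y k * y l"
    by (auto simp: ycoef_def min_def max_def power2_eq_square)
  then show "Eop d y x x' = DS_op d (ycoef y) x x'"
    unfolding x x' DS_entry by (simp add: Eop_def)
qed

lemma DS_pairs_Suc: "DS_pairs (Suc d) = DS_pairs d \<union> (\<lambda>i. (i, d)) ` {..d}"
  by (auto simp: DS_pairs_def)

lemma ycoef_sum: "(\<Sum>(i, j)\<in>DS_pairs d. ycoef y i j) = (\<Sum>k<d. y k)\<^sup>2"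
proof (induction d)
  case 0
  have "DS_pairs 0 = {}" by (auto simp: DS_pairs_def)
  then show ?case by simp
next
  case (Suc d)
  have disj: "DS_pairs d \<inter> (\<lambda>i. (i, d)) ` {..d} = {}" by (auto simp: DS_pairs_def)
  have "(\<Sum>(i, j)\<in>DS_pairs (Suc d). ycoef y i j) =
        (\<Sum>(i, j)\<in>DS_pairs d. ycoef y i j) + (\<Sum>(i, j)\<in>(\<lambda>i. (i, d)) ` {..d}. ycoef y i j)"
    unfolding DS_pairs_Suc by (rule sum.union_disjoint) (use finite_DS_pairs disj in auto)
  also have "(\<Sum>(i, j)\<in>(\<lambda>i. (i, d)) ` {..d}. ycoef y i j) = (\<Sum>i\<le>d. ycoef y i d)"
    by (subst sum.reindex) (auto simp: inj_on_def)
  also have "\<dots> = (\<Sum>i<d. 2 * y i * y d) + (y d)\<^sup>2"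
    by (simp add: lessThan_Suc_atMost[symmetric] ycoef_def)
  also have "(\<Sum>i<d. 2 * y i * y d) = 2 * y d * (\<Sum>i<d. y i)"
    by (simp add: sum_distrib_left algebra_simps)
  finally show ?case using Suc.IH by (simp add: power2_eq_square algebra_simps)
qed

lemma Eop_diag_symmetric:
  fixes d :: nat and y :: "nat \<Rightarrow> real"
  assumes "\<And>k. k < d \<Longrightarrow> 0 \<le> y k" "(\<Sum>k<d. y k) = 1"
  shows "diag_symmetric d (Eop d y)"
  unfolding diag_symmetric_def
proof (intro exI conjI)
  show "Eop d y = DS_op d (ycoef y)" by (rule Eop_DS)
  show "DS_coeffs d (ycoef y)"
  proof -
    have "\<forall>(i, j)\<in>DS_pairs d. 0 \<le> ycoef y i j"
      using assms(1) by (auto simp: DS_pairs_def ycoef_def)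
    moreover have "(\<Sum>(i, j)\<in>DS_pairs d. ycoef y i j) = 1"
      using ycoef_sum[where d=d and y=y] assms(2) by simp
    ultimately show ?thesis unfolding DS_coeffs_def by blast
  qed
qed




definition proj :: "nat \<Rightarrow> (nat \<Rightarrow> complex) \<Rightarrow> nat \<Rightarrow> nat \<Rightarrow> complex" where
  "proj d f = (\<lambda>k r. if k < d \<and> r < d then f k * cnj (f r) else 0)"

lemma proj_density:
  assumes "(\<Sum>k<d. (cmod (f k))\<^sup>2) = 1"
  shows "density_on {..<d} (proj d f)"
  unfolding density_on_def
proof (intro conjI allI ballI impI)
  fix x y assume "x \<notin> {..<d} \<or> y \<notin> {..<d}"
  then show "proj d f x y = 0" by (auto simp: proj_def)
next
  fix x y assume "x \<in> {..<d}" "y \<in> {..<d}"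
  then show "proj d f x y = cnj (proj d f y x)" by (simp add: proj_def)
next
  fix v :: "nat \<Rightarrow> complex"
  define S where "S = (\<Sum>x<d. cnj (v x) * f x)"
  have "(\<Sum>x<d. \<Sum>y<d. cnj (v x) * proj d f x y * v y) = (\<Sum>x<d. \<Sum>y<d. (cnj (v x) * f x) * cnj (cnj (v y) * f y))"
    by (rule sum.cong[OF refl], rule sum.cong[OF refl]) (simp add: proj_def algebra_simps)
  also have "\<dots> = S * cnj S" unfolding S_def cnj_sum sum_product by (rule refl)
  also have "\<dots> = complex_of_real ((cmod S)\<^sup>2)" by (rule complex_norm_square[symmetric])
  finally show "0 \<le> Re (\<Sum>x\<in>{..<d}. \<Sum>y\<in>{..<d}. cnj (v x) * proj d f x y * v y)" by simp
next
  have "(\<Sum>x<d. proj d f x x) = (\<Sum>x<d. complex_of_real ((cmod (f x))\<^sup>2))"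
    by (rule sum.cong[OF refl]) (simp add: proj_def complex_norm_square[symmetric] del: of_real_power)
  also have "\<dots> = complex_of_real (\<Sum>x<d. (cmod (f x))\<^sup>2)" by (rule of_real_sum[symmetric])
  also have "\<dots> = 1" using assms by (simp only: of_real_1)
  finally show "(\<Sum>x\<in>{..<d}. proj d f x x) = 1" .
qed

definition psi :: "nat \<Rightarrow> (nat \<Rightarrow> real) \<Rightarrow> nat \<Rightarrow> nat \<Rightarrow> complex" where
  "psi N y t k = complex_of_real (sqrt (y k)) * cis (2 * pi / real N) ^ (t * 3 ^ k)"

lemma psi_norm:
  assumes "0 \<le> y k"
  shows "(cmod (psi N y t k))\<^sup>2 = y k"
proof -
  have "cmod (cis (2 * pi / real N) ^ (t * 3 ^ k)) = 1" by (simp add: norm_power)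
  then show ?thesis using assms by (simp add: psi_def norm_mult)
qed

lemma pow3_bound: "k < d \<Longrightarrow> l < d \<Longrightarrow> (3::nat) ^ k + 3 ^ l < 2 * 3 ^ d"
proof -
  assume "k < d" "l < d"
  then have "(3::nat) ^ k < 3 ^ d" "(3::nat) ^ l < 3 ^ d" by (simp_all add: power_strict_increasing_iff)
  then show ?thesis by linarith
qed

lemma sqrt4:
  assumes "0 \<le> a" "0 \<le> b"
  shows "sqrt a * sqrt b * sqrt a * sqrt b = a * b" "sqrt a * sqrt b * sqrt b * sqrt a = a * b"
proof -
  have "sqrt a * sqrt b * sqrt a * sqrt b = (sqrt a * sqrt a) * (sqrt b * sqrt b)" by (simp add: algebra_simps)
  then show "sqrt a * sqrt b * sqrt a * sqrt b = a * b" using assms by simp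
  have "sqrt a * sqrt b * sqrt b * sqrt a = (sqrt a * sqrt a) * (sqrt b * sqrt b)" by (simp add: algebra_simps)
  then show "sqrt a * sqrt b * sqrt b * sqrt a = a * b" using assms by simp
qed

lemma Eop_entry_sum:
  fixes y :: "nat \<Rightarrow> real"
  assumes y0: "\<And>k. k < d \<Longrightarrow> 0 \<le> y k"
  defines "N \<equiv> 2 * 3 ^ d"
  shows "Eop d y (k, l) (r, s) =
     (\<Sum>t<N. complex_of_real (1 / real N) * (proj d (psi N y t) k r * proj d (psi N y t) l s))"
proof (cases "k < d \<and> l < d \<and> r < d \<and> s < d")
  case False
  then have "Eop d y (k, l) (r, s) = 0" by (auto simp: Eop_def peq_def)
  moreover have Z: "proj d (psi N y t) k r * proj d (psi N y t) l s = 0" for t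
    using False by (auto simp: proj_def)
  moreover have "(\<Sum>t<N. complex_of_real (1 / real N) * (proj d (psi N y t) k r * proj d (psi N y t) l s)) = 0"
    by (intro sum.neutral ballI) (simp only: Z mult_zero_right)
  ultimately show ?thesis by simp
next
  case True
  define z where "z = cis (2 * pi / real N)"
  define a where "a = (3::nat) ^ k + 3 ^ l"
  define b where "b = (3::nat) ^ r + 3 ^ s"
  define c where "c = sqrt (y k) * sqrt (y l) * sqrt (y r) * sqrt (y s)"
  have N0: "N > 0" unfolding N_def by simp
  have aN: "a < N" unfolding a_def N_def using True pow3_bound by blast
  have bN: "b < N" unfolding b_def N_def using True pow3_bound by blast
  have tm: "proj d (psi N y t) k r * proj d (psi N y t) l s = complex_of_real c * (z ^ (t * a) * cnj (z ^ (t * b)))" for t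
    using True unfolding proj_def psi_def z_def[symmetric] a_def b_def c_def
    by (simp add: algebra_simps power_add)
  have "(\<Sum>t<N. complex_of_real (1 / real N) * (proj d (psi N y t) k r * proj d (psi N y t) l s)) =
        complex_of_real (1 / real N) * complex_of_real c * (\<Sum>t<N. z ^ (t * a) * cnj (z ^ (t * b)))"
    unfolding tm by (simp add: sum_distrib_left mult.assoc)
  also have "(\<Sum>t<N. z ^ (t * a) * cnj (z ^ (t * b))) = (if a = b then of_nat N else 0)"
    unfolding z_def by (rule root_sum[OF N0 aN bN])
  also have "(a = b) = peq k l r s"
    unfolding a_def b_def peq_def using pow3_peq by auto
  finally have R: "(\<Sum>t<N. complex_of_real (1 / real N) * (proj d (psi N y t) k r * proj d (psi N y t) l s)) =
      (if peq k l r s then complex_of_real c else 0)" using N0 by simp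
  have "peq k l r s \<Longrightarrow> c = y k * y l"
    unfolding peq_def c_def using y0 True sqrt4 by auto
  then show ?thesis unfolding R using True by (auto simp: Eop_def)
qed

lemma Eop_separable:
  fixes y :: "nat \<Rightarrow> real"
  assumes y0: "\<And>k. k < d \<Longrightarrow> 0 \<le> y k" and y1: "(\<Sum>k<d. y k) = 1"
  shows "separable d (Eop d y)"
proof -
  define N :: nat where "N = 2 * 3 ^ d"
  have N0: "N > 0" unfolding N_def by simp
  show ?thesis unfolding separable_def
  apply (rule exI[of _ N], rule exI[of _ "\<lambda>_. 1 / real N"], rule exI[of _ "\<lambda>t. proj d (psi N y t)"],
    rule exI[of _ "\<lambda>t. proj d (psi N y t)"])
  proof (intro conjI)
  show "\<forall>m<N. 0 \<le> (\<lambda>_. 1 / real N) m \<and> density_on {..<d} ((\<lambda>t. proj d (psi N y t)) m) \<and>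
      density_on {..<d} ((\<lambda>t. proj d (psi N y t)) m)"
  proof (intro allI impI conjI)
    fix m
    have "(\<Sum>k<d. (cmod (psi N y m k))\<^sup>2) = 1" using y1 y0 psi_norm by simp
    then show "density_on {..<d} ((\<lambda>t. proj d (psi N y t)) m)" by (simp add: proj_density)
    then show "density_on {..<d} ((\<lambda>t. proj d (psi N y t)) m)" .
  qed simp
  show "(\<Sum>m<N. (\<lambda>_. 1 / real N) m) = 1" using N0 by simp
  show "Eop d y = (\<lambda>x x'. \<Sum>m<N. complex_of_real ((\<lambda>_. 1 / real N) m) *
        tensor_op ((\<lambda>t. proj d (psi N y t)) m) ((\<lambda>t. proj d (psi N y t)) m) x x')"
  proof (intro ext)
    fix x x' :: "nat \<times> nat"
    obtain k l where x: "x = (k, l)" by (cases x)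
    obtain r s where x': "x' = (r, s)" by (cases x')
    show "Eop d y x x' = (\<Sum>m<N. complex_of_real ((\<lambda>_. 1 / real N) m) *
        tensor_op ((\<lambda>t. proj d (psi N y t)) m) ((\<lambda>t. proj d (psi N y t)) m) x x')"
      unfolding x x' tensor_op_def N_def using Eop_entry_sum[OF y0] by simp
  qed
  qed
qed




lemma sum_split_add: "(\<Sum>m<n1 + (n2::nat). F m) = (\<Sum>m<n1. F m) + (\<Sum>m<n2. F (n1 + m))"
  by (induction n2) (simp_all add: add.assoc)

lemma separableE:
  assumes "separable d \<rho>"
  obtains n :: nat and q A B where "\<forall>m<n. 0 \<le> q m \<and> density_on {..<d} (A m) \<and> density_on {..<d} (B m)"
    "(\<Sum>m<n. q m) = 1" "\<rho> = (\<lambda>x y. \<Sum>m<n. complex_of_real (q m) * tensor_op (A m) (B m) x y)"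
  using assms unfolding separable_def by blast

lemma sep_convex:
  assumes a: "separable d a" and b: "separable d b" and t: "0 \<le> t" "t \<le> 1"
  shows "separable d (\<lambda>x y. complex_of_real t * a x y + complex_of_real (1 - t) * b x y)"
proof -
  obtain n1 :: nat and q1 A1 B1 where h1: "\<forall>m<n1. 0 \<le> q1 m \<and> density_on {..<d} (A1 m) \<and> density_on {..<d} (B1 m)"
    "(\<Sum>m<n1. q1 m) = 1" "a = (\<lambda>x y. \<Sum>m<n1. complex_of_real (q1 m) * tensor_op (A1 m) (B1 m) x y)"
    by (rule separableE[OF a]) blast
  obtain n2 :: nat and q2 A2 B2 where h2: "\<forall>m<n2. 0 \<le> q2 m \<and> density_on {..<d} (A2 m) \<and> density_on {..<d} (B2 m)"
    "(\<Sum>m<n2. q2 m) = 1" "b = (\<lambda>x y. \<Sum>m<n2. complex_of_real (q2 m) * tensor_op (A2 m) (B2 m) x y)"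
    by (rule separableE[OF b]) blast
  define q where "q = (\<lambda>m. if m < n1 then t * q1 m else (1 - t) * q2 (m - n1))"
  define A where "A = (\<lambda>m. if m < n1 then A1 m else A2 (m - n1))"
  define B where "B = (\<lambda>m. if m < n1 then B1 m else B2 (m - n1))"
  have 1: "\<forall>m<n1 + n2. 0 \<le> q m \<and> density_on {..<d} (A m) \<and> density_on {..<d} (B m)"
  proof (intro allI impI)
    fix m assume "m < n1 + n2"
    then show "0 \<le> q m \<and> density_on {..<d} (A m) \<and> density_on {..<d} (B m)"
      using h1(1) h2(1)[rule_format, of "m - n1"] t unfolding q_def A_def B_def by auto
  qed
  have 2: "(\<Sum>m<n1 + n2. q m) = 1"
    unfolding sum_split_add q_def using h1(2) h2(2) by (simp add: sum_distrib_left[symmetric])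
  have 3: "(\<lambda>x y. complex_of_real t * a x y + complex_of_real (1 - t) * b x y) =
     (\<lambda>x y. \<Sum>m<n1 + n2. complex_of_real (q m) * tensor_op (A m) (B m) x y)"
    unfolding sum_split_add h1(3) h2(3) q_def A_def B_def
    by (simp add: sum_distrib_left mult.assoc)
  show ?thesis unfolding separable_def using 1 2 3 by blast
qed

lemma DS_op_lin:
  "DS_op d (\<lambda>i j. t * p1 i j + u * p2 i j) =
   (\<lambda>x y. complex_of_real t * DS_op d p1 x y + complex_of_real u * DS_op d p2 x y)"
proof (intro ext)
  fix x x' :: "nat \<times> nat"
  obtain k l where x: "x = (k, l)" by (cases x)
  obtain r s where x': "x' = (r, s)" by (cases x')
  show "DS_op d (\<lambda>i j. t * p1 i j + u * p2 i j) x x' =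
      complex_of_real t * DS_op d p1 x x' + complex_of_real u * DS_op d p2 x x'"
    unfolding x x' DS_entry by (simp add: algebra_simps add_divide_distrib)
qed

lemma DS_convex:
  assumes a: "diag_symmetric d a" and b: "diag_symmetric d b" and t: "0 \<le> t" "t \<le> 1"
  shows "diag_symmetric d (\<lambda>x y. complex_of_real t * a x y + complex_of_real (1 - t) * b x y)"
proof -
  obtain p1 where p1: "DS_coeffs d p1" "a = DS_op d p1" using a unfolding diag_symmetric_def by blast
  obtain p2 where p2: "DS_coeffs d p2" "b = DS_op d p2" using b unfolding diag_symmetric_def by blast
  define p where "p = (\<lambda>i j. t * p1 i j + (1 - t) * p2 i j)"
  have "DS_coeffs d p"
  proof -
    have "\<forall>(i, j)\<in>DS_pairs d. 0 \<le> p i j"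
    proof (intro ballI, clarify)
      fix i j assume ij: "(i, j) \<in> DS_pairs d"
      then have "0 \<le> p1 i j" "0 \<le> p2 i j" using p1(1) p2(1) unfolding DS_coeffs_def by auto
      then show "0 \<le> p i j" unfolding p_def using t by simp
    qed
    moreover have "(\<Sum>(i, j)\<in>DS_pairs d. p i j) = t * (\<Sum>(i, j)\<in>DS_pairs d. p1 i j) + (1 - t) * (\<Sum>(i, j)\<in>DS_pairs d. p2 i j)"
      unfolding p_def by (simp add: sum.distrib sum_distrib_left case_prod_beta)
    ultimately show ?thesis using p1(1) p2(1) unfolding DS_coeffs_def by simp
  qed
  moreover have "(\<lambda>x y. complex_of_real t * a x y + complex_of_real (1 - t) * b x y) = DS_op d p"
    unfolding p_def DS_op_lin p1(2) p2(2) by (rule refl)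
  ultimately show ?thesis unfolding diag_symmetric_def by blast
qed

lemma S_convex:
  assumes "a \<in> sep_DS_states d" "b \<in> sep_DS_states d" "0 \<le> t" "t \<le> 1"
  shows "(\<lambda>x y. complex_of_real t * a x y + complex_of_real (1 - t) * b x y) \<in> sep_DS_states d"
  using assms sep_convex DS_convex unfolding sep_DS_states_def by blast




type_synonym op2 = "(nat \<times> nat) \<Rightarrow> (nat \<times> nat) \<Rightarrow> complex"

lemma convex_sum:
  fixes S :: "op2 set" and \<sigma> :: "nat \<Rightarrow> op2"
  assumes conv: "\<And>a b t. a \<in> S \<Longrightarrow> b \<in> S \<Longrightarrow> 0 \<le> t \<Longrightarrow> t \<le> 1 \<Longrightarrow>
     (\<lambda>x y. complex_of_real t * a x y + complex_of_real (1 - t) * b x y) \<in> S"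
  assumes "finite M" "M \<noteq> {}"
  shows "(\<forall>m\<in>M. 0 < w m \<and> \<sigma> m \<in> S) \<Longrightarrow> (\<Sum>m\<in>M. w m) = 1 \<Longrightarrow>
     (\<lambda>x y. \<Sum>m\<in>M. complex_of_real (w m) * \<sigma> m x y) \<in> S"
  using assms(2,3)
proof (induction M arbitrary: w rule: finite_ne_induct)
  case (singleton m)
  then show ?case by simp
next
  case (insert m F)
  define W where "W = (\<Sum>j\<in>F. w j)"
  have wm: "w m + W = 1" using insert.prems(2) insert.hyps(1,3) unfolding W_def by simp
  have W0: "W > 0" unfolding W_def using insert.prems(1) insert.hyps(1,2) by (intro sum_pos) auto
  define w' where "w' = (\<lambda>j. w j / W)"
  have "(\<forall>j\<in>F. 0 < w' j \<and> \<sigma> j \<in> S)" using insert.prems(1) W0 unfolding w'_def by auto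
  moreover have "(\<Sum>j\<in>F. w' j) = 1" unfolding w'_def W_def using W0 W_def
    by (simp add: sum_divide_distrib[symmetric])
  ultimately have tau: "(\<lambda>x y. \<Sum>j\<in>F. complex_of_real (w' j) * \<sigma> j x y) \<in> S" by (rule insert.IH)
  have sm: "\<sigma> m \<in> S" "0 < w m" using insert.prems(1) by auto
  have "(\<lambda>x y. complex_of_real (w m) * \<sigma> m x y + complex_of_real (1 - w m) *
           (\<Sum>j\<in>F. complex_of_real (w' j) * \<sigma> j x y)) \<in> S"
    by (rule conv[OF sm(1) tau]) (use sm(2) wm W0 in auto)
  moreover have "(\<lambda>x y. complex_of_real (w m) * \<sigma> m x y + complex_of_real (1 - w m) *
           (\<Sum>j\<in>F. complex_of_real (w' j) * \<sigma> j x y)) = (\<lambda>x y. \<Sum>j\<in>insert m F. complex_of_real (w j) * \<sigma> j x y)"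
  proof (intro ext)
    fix x y
    have "complex_of_real (1 - w m) * (\<Sum>j\<in>F. complex_of_real (w' j) * \<sigma> j x y) =
          (\<Sum>j\<in>F. complex_of_real (w j) * \<sigma> j x y)"
    proof -
      have "1 - w m = W" using wm by simp
      then have "complex_of_real (1 - w m) * (\<Sum>j\<in>F. complex_of_real (w' j) * \<sigma> j x y) =
          (\<Sum>j\<in>F. complex_of_real (W * w' j) * \<sigma> j x y)" by (simp add: sum_distrib_left mult.assoc)
      also have "\<dots> = (\<Sum>j\<in>F. complex_of_real (w j) * \<sigma> j x y)" unfolding w'_def using W0 by simp
      finally show ?thesis .
    qed
    then show "complex_of_real (w m) * \<sigma> m x y + complex_of_real (1 - w m) *
           (\<Sum>j\<in>F. complex_of_real (w' j) * \<sigma> j x y) = (\<Sum>j\<in>insert m F. complex_of_real (w j) * \<sigma> j x y)"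
      using insert.hyps(1,3) by simp
  qed
  ultimately show ?case by simp
qed

lemma extremal_finite:
  fixes S :: "op2 set" and \<sigma> :: "nat \<Rightarrow> op2"
  assumes hext: "extremal_in S \<rho>"
  assumes conv: "\<And>a b t. a \<in> S \<Longrightarrow> b \<in> S \<Longrightarrow> 0 \<le> t \<Longrightarrow> t \<le> 1 \<Longrightarrow>
     (\<lambda>x y. complex_of_real t * a x y + complex_of_real (1 - t) * b x y) \<in> S"
  assumes M: "finite M" "m0 \<in> M" and pos: "\<forall>m\<in>M. 0 < w m \<and> \<sigma> m \<in> S" and sum1: "(\<Sum>m\<in>M. w m) = 1"
    and rho: "\<rho> = (\<lambda>x y. \<Sum>m\<in>M. complex_of_real (w m) * \<sigma> m x y)"
  shows "\<sigma> m0 = \<rho>"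
proof (cases "M = {m0}")
  case True
  then have "w m0 = 1" using sum1 by simp
  then show ?thesis using True rho by simp
next
  case False
  define F where "F = M - {m0}"
  have F: "finite F" "F \<noteq> {}" "m0 \<notin> F" "M = insert m0 F" using M False unfolding F_def by auto
  define W where "W = (\<Sum>j\<in>F. w j)"
  have wm: "w m0 + W = 1" using sum1 F unfolding W_def by simp
  have W0: "W > 0" unfolding W_def using pos F by (intro sum_pos) auto
  define w' where "w' = (\<lambda>j. w j / W)"
  have "(\<forall>j\<in>F. 0 < w' j \<and> \<sigma> j \<in> S)" using pos W0 F unfolding w'_def by auto
  moreover have "(\<Sum>j\<in>F. w' j) = 1" unfolding w'_def W_def using W0 W_def
    by (simp add: sum_divide_distrib[symmetric])
  ultimately have tau: "(\<lambda>x y. \<Sum>j\<in>F. complex_of_real (w' j) * \<sigma> j x y) \<in> S"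
    using convex_sum[OF conv F(1,2)] by blast
  define \<tau> where "\<tau> = (\<lambda>x y. \<Sum>j\<in>F. complex_of_real (w' j) * \<sigma> j x y)"
  have sm: "\<sigma> m0 \<in> S" "0 < w m0" using pos M by auto
  have eq: "\<rho> = (\<lambda>x y. complex_of_real (w m0) * \<sigma> m0 x y + complex_of_real (1 - w m0) * \<tau> x y)"
  proof (rule ext, rule ext)
    fix x y
    have "complex_of_real (1 - w m0) * \<tau> x y = (\<Sum>j\<in>F. complex_of_real (w j) * \<sigma> j x y)"
    proof -
      have "1 - w m0 = W" using wm by simp
      then have "complex_of_real (1 - w m0) * \<tau> x y =
          (\<Sum>j\<in>F. complex_of_real (W * w' j) * \<sigma> j x y)" unfolding \<tau>_def by (simp add: sum_distrib_left mult.assoc)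
      also have "\<dots> = (\<Sum>j\<in>F. complex_of_real (w j) * \<sigma> j x y)" unfolding w'_def using W0 by simp
      finally show ?thesis .
    qed
    then show "\<rho> x y = complex_of_real (w m0) * \<sigma> m0 x y + complex_of_real (1 - w m0) * \<tau> x y"
      unfolding rho using F by simp
  qed
  have "w m0 < 1" using wm W0 by simp
  have H: "\<forall>a\<in>S. \<forall>b\<in>S. \<forall>t::real. 0 < t \<and> t < 1 \<and>
        \<rho> = (\<lambda>x y. complex_of_real t * a x y + complex_of_real (1 - t) * b x y) \<longrightarrow> a = b"
    using hext unfolding extremal_in_def by blast
  have tauS: "\<tau> \<in> S" unfolding \<tau>_def by (rule tau)
  have "\<sigma> m0 = \<tau>" using H[rule_format, OF sm(1) tauS, of "w m0"] sm(2) \<open>w m0 < 1\<close> eq by blast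
  then show ?thesis using eq by (simp add: algebra_simps flip: distrib_right of_real_add)
qed




lemma ineq_term:
  fixes d k l :: nat
  assumes A: "density_on {..<d} A" and B: "density_on {..<d} B" and kl: "k < d" "l < d"
  shows "Re (A k l * B l k) \<le> sqrt (Re (A k k) * Re (B k k)) * sqrt (Re (A l l) * Re (B l l))"
    "sqrt (Re (A k k) * Re (B k k)) * sqrt (Re (A l l) * Re (B l l)) \<le>
       (Re (A k k) * Re (B l l) + Re (A l l) * Re (B k k)) / 2"
proof -
  have fin: "finite {..<d}" by simp
  have kI: "k \<in> {..<d}" and lI: "l \<in> {..<d}" using kl by auto
  have a1: "cmod (A k l) \<le> sqrt (Re (A k k) * Re (A l l))"
    by (rule real_le_rsqrt, rule dens_offdiag[OF A fin kI lI])
  have b1: "cmod (B l k) \<le> sqrt (Re (B l l) * Re (B k k))"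
    by (rule real_le_rsqrt, rule dens_offdiag[OF B fin lI kI])
  have "Re (A k l * B l k) \<le> cmod (A k l * B l k)" by (rule complex_Re_le_cmod)
  also have "\<dots> = cmod (A k l) * cmod (B l k)" by (simp add: norm_mult)
  also have "\<dots> \<le> sqrt (Re (A k k) * Re (A l l)) * sqrt (Re (B l l) * Re (B k k))"
    by (rule mult_mono[OF a1 b1]) (use dens_diag(2)[OF A fin kI] dens_diag(2)[OF A fin lI] in simp_all)
  also have "\<dots> = sqrt (Re (A k k) * Re (B k k)) * sqrt (Re (A l l) * Re (B l l))"
    by (simp add: real_sqrt_mult[symmetric] ac_simps del: real_sqrt_mult)
  finally show "Re (A k l * B l k) \<le> sqrt (Re (A k k) * Re (B k k)) * sqrt (Re (A l l) * Re (B l l))" .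
  have "sqrt (Re (A k k) * Re (B k k)) * sqrt (Re (A l l) * Re (B l l)) =
        sqrt ((Re (A k k) * Re (B l l)) * (Re (A l l) * Re (B k k)))"
    by (simp add: real_sqrt_mult[symmetric] ac_simps del: real_sqrt_mult)
  also have "\<dots> \<le> (Re (A k k) * Re (B l l) + Re (A l l) * Re (B k k)) / 2"
    by (rule arith_geo_mean_sqrt)
       (use dens_diag(2)[OF A fin kI] dens_diag(2)[OF A fin lI] dens_diag(2)[OF B fin kI] dens_diag(2)[OF B fin lI] in simp_all)
  finally show "sqrt (Re (A k k) * Re (B k k)) * sqrt (Re (A l l) * Re (B l l)) \<le>
       (Re (A k k) * Re (B l l) + Re (A l l) * Re (B k k)) / 2" .
qed




theorem corollary1:
  fixes d :: nat and p :: "nat \<Rightarrow> nat \<Rightarrow> real"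
  assumes "d \<ge> 2"
    and "DS_coeffs d p"
    and "extremal_in (sep_DS_states d) (DS_op d p)"
  shows "\<forall>i j. i < j \<and> j < d \<longrightarrow> p i j = 2 * sqrt (p i i * p j j)"
proof -
  note coef = assms(2) and hext = assms(3)
  have "DS_op d p \<in> sep_DS_states d" using hext unfolding extremal_in_def by blast
  then have "separable d (DS_op d p)" unfolding sep_DS_states_def by blast
  then obtain n :: nat and q A B where
    h1: "\<forall>m<n. 0 \<le> q m \<and> density_on {..<d} (A m) \<and> density_on {..<d} (B m)" and
    h2: "(\<Sum>m<n. q m) = 1" and
    h3: "DS_op d p = (\<lambda>x y. \<Sum>m<n. complex_of_real (q m) * tensor_op (A m) (B m) x y)"
    by (rule separableE) blast
  have fin: "finite {..<d}" by simp
  have q0: "0 \<le> q m" if "m < n" for m using h1 that by blast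
  have dA: "density_on {..<d} (A m)" if "m < n" for m using h1 that by blast
  have dB: "density_on {..<d} (B m)" if "m < n" for m using h1 that by blast
  have ent: "DS_op d p (k, l) (r, s) = (\<Sum>m<n. complex_of_real (q m) * (A m k r * B m l s))" for k l r s
    unfolding h3 by (simp add: tensor_op_def)
  have Ad: "A m k k = complex_of_real (Re (A m k k))" "0 \<le> Re (A m k k)" if "m < n" "k < d" for m k
    using dens_diag[OF dA[OF that(1)] fin] that(2) by auto
  have Bd: "B m k k = complex_of_real (Re (B m k k))" "0 \<le> Re (B m k k)" if "m < n" "k < d" for m k
    using dens_diag[OF dB[OF that(1)] fin] that(2) by auto
  define a where "a = (\<lambda>m k. Re (A m k k) * Re (B m k k))"
  define rt where "rt = (\<lambda>m k. sqrt \<bar>a m k\<bar>)"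
  define s where "s = (\<lambda>m. \<Sum>k<d. rt m k)"
  define w where "w = (\<lambda>m. q m * (s m)\<^sup>2)"
  define y where "y = (\<lambda>m k. rt m k / s m)"
  define M where "M = {m. m < n \<and> 0 < w m}"
  have a0: "0 \<le> a m k" if "m < n" "k < d" for m k using Ad(2)[OF that] Bd(2)[OF that] by (simp add: a_def)
  have rt0: "0 \<le> rt m k" for m k unfolding rt_def by simp
  have rt2: "rt m k * rt m k = a m k" if "m < n" "k < d" for m k unfolding rt_def using a0[OF that] by simp
  have s0: "0 \<le> s m" for m unfolding s_def by (rule sum_nonneg) (simp add: rt0)
  have w0: "0 \<le> w m" if "m < n" for m unfolding w_def using q0[OF that] by simp
  have P1: "p k k = (\<Sum>m<n. q m * (rt m k * rt m k))" if "k < d" for k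
  proof -
    have "complex_of_real (p k k) = DS_op d p (k, k) (k, k)" using that by (simp add: DS_entry peq_def)
    also have "\<dots> = (\<Sum>m<n. complex_of_real (q m) * (A m k k * B m k k))" by (rule ent)
    also have "\<dots> = (\<Sum>m<n. complex_of_real (q m * (rt m k * rt m k)))"
    proof (rule sum.cong[OF refl])
      fix m assume "m \<in> {..<n}"
      then have m: "m < n" by simp
      show "complex_of_real (q m) * (A m k k * B m k k) = complex_of_real (q m * (rt m k * rt m k))"
        using Ad(1)[OF m that] Bd(1)[OF m that] rt2[OF m that] unfolding a_def by (metis of_real_mult)
    qed
    also have "\<dots> = complex_of_real (\<Sum>m<n. q m * (rt m k * rt m k))" by (rule of_real_sum[symmetric])
    finally show ?thesis by (simp only: of_real_eq_iff)
  qed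
  have P2: "p k l / 2 = (\<Sum>m<n. q m * (rt m k * rt m l))" if "k < l" "l < d" for k l
  proof -
    have kd: "k < d" using that by simp
    have ld: "l < d" using that by simp
    have E1: "complex_of_real (p k l / 2) = DS_op d p (k, l) (k, l)" using that by (simp add: DS_entry peq_def)
    have E2: "complex_of_real (p k l / 2) = DS_op d p (l, k) (l, k)" using that by (simp add: DS_entry peq_def)
    have E3: "complex_of_real (p k l / 2) = DS_op d p (k, l) (l, k)" using that by (simp add: DS_entry peq_def)
    have R1: "p k l / 2 = (\<Sum>m<n. q m * (Re (A m k k) * Re (B m l l)))"
    proof -
      have "complex_of_real (p k l / 2) = (\<Sum>m<n. complex_of_real (q m) * (A m k k * B m l l))" using E1 ent by simp
      also have "\<dots> = (\<Sum>m<n. complex_of_real (q m * (Re (A m k k) * Re (B m l l))))"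
      proof (rule sum.cong[OF refl])
        fix m assume "m \<in> {..<n}"
        then have m: "m < n" by simp
        show "complex_of_real (q m) * (A m k k * B m l l) = complex_of_real (q m * (Re (A m k k) * Re (B m l l)))"
          using Ad(1)[OF m kd] Bd(1)[OF m that(2)] by (metis of_real_mult)
      qed
      also have "\<dots> = complex_of_real (\<Sum>m<n. q m * (Re (A m k k) * Re (B m l l)))" by (rule of_real_sum[symmetric])
      finally show ?thesis by (simp only: of_real_eq_iff)
    qed
    have R2: "p k l / 2 = (\<Sum>m<n. q m * (Re (A m l l) * Re (B m k k)))"
    proof -
      have "complex_of_real (p k l / 2) = (\<Sum>m<n. complex_of_real (q m) * (A m l l * B m k k))" using E2 ent by simp
      also have "\<dots> = (\<Sum>m<n. complex_of_real (q m * (Re (A m l l) * Re (B m k k))))"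
      proof (rule sum.cong[OF refl])
        fix m assume "m \<in> {..<n}"
        then have m: "m < n" by simp
        show "complex_of_real (q m) * (A m l l * B m k k) = complex_of_real (q m * (Re (A m l l) * Re (B m k k)))"
          using Ad(1)[OF m that(2)] Bd(1)[OF m kd] by (metis of_real_mult)
      qed
      also have "\<dots> = complex_of_real (\<Sum>m<n. q m * (Re (A m l l) * Re (B m k k)))" by (rule of_real_sum[symmetric])
      finally show ?thesis by (simp only: of_real_eq_iff)
    qed
    have R3: "p k l / 2 = (\<Sum>m<n. q m * Re (A m k l * B m l k))"
    proof -
      have "complex_of_real (p k l / 2) = (\<Sum>m<n. complex_of_real (q m) * (A m k l * B m l k))" using E3 ent by simp
      then have "p k l / 2 = Re (\<Sum>m<n. complex_of_real (q m) * (A m k l * B m l k))"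
        by (metis Re_complex_of_real)
      then show ?thesis by (simp add: Re_sum)
    qed
    have rtkl: "rt m k * rt m l = sqrt (Re (A m k k) * Re (B m k k)) * sqrt (Re (A m l l) * Re (B m l l))" if "m < n" for m
      unfolding rt_def using a0[OF that kd] a0[OF that ld] by (simp add: a_def)
    have "p k l / 2 \<le> (\<Sum>m<n. q m * (rt m k * rt m l))"
      unfolding R3
    proof (rule sum_mono)
      fix m assume "m \<in> {..<n}"
      then have m: "m < n" by simp
      show "q m * Re (A m k l * B m l k) \<le> q m * (rt m k * rt m l)"
        unfolding rtkl[OF m] by (rule mult_left_mono[OF ineq_term(1)[OF dA[OF m] dB[OF m] kd that(2)] q0[OF m]])
    qed
    moreover have "(\<Sum>m<n. q m * (rt m k * rt m l)) \<le>
        (\<Sum>m<n. q m * ((Re (A m k k) * Re (B m l l) + Re (A m l l) * Re (B m k k)) / 2))"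
    proof (rule sum_mono)
      fix m assume "m \<in> {..<n}"
      then have m: "m < n" by simp
      show "q m * (rt m k * rt m l) \<le> q m * ((Re (A m k k) * Re (B m l l) + Re (A m l l) * Re (B m k k)) / 2)"
        unfolding rtkl[OF m] by (rule mult_left_mono[OF ineq_term(2)[OF dA[OF m] dB[OF m] kd that(2)] q0[OF m]])
    qed
    moreover have "(\<Sum>m<n. q m * ((Re (A m k k) * Re (B m l l) + Re (A m l l) * Re (B m k k)) / 2)) = p k l / 2"
    proof -
      have "(\<Sum>m<n. q m * ((Re (A m k k) * Re (B m l l) + Re (A m l l) * Re (B m k k)) / 2)) =
         ((\<Sum>m<n. q m * (Re (A m k k) * Re (B m l l))) + (\<Sum>m<n. q m * (Re (A m l l) * Re (B m k k)))) / 2"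
        by (simp add: sum.distrib sum_divide_distrib[symmetric] algebra_simps)
      then show ?thesis using R1 R2 by simp
    qed
    ultimately show ?thesis by linarith
  qed
  have P2': "(\<Sum>m<n. q m * (rt m k * rt m l)) = (if k = l then p k k else p (min k l) (max k l) / 2)"
    if "k < d" "l < d" for k l
  proof (cases "k = l")
    case True then show ?thesis using P1[OF that(1)] by simp
  next
    case False
    show ?thesis
    proof (cases "k < l")
      case True then show ?thesis using P2[OF True that(2)] False by simp
    next
      case c: False
      then have "l < k" using False by simp
      then show ?thesis using P2[OF \<open>l < k\<close> that(1)] False c by (simp add: ac_simps)
    qed
  qed
  have ssq: "(s m)\<^sup>2 = (\<Sum>(i, j)\<in>DS_pairs d. ycoef (rt m) i j)" for m
    unfolding s_def by (rule ycoef_sum[symmetric])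
  have coefp: "(\<Sum>m<n. q m * ycoef (rt m) i j) = p i j" if "(i, j) \<in> DS_pairs d" for i j
  proof -
    have ij: "i \<le> j" "j < d" using that by (auto simp: DS_pairs_def)
    show ?thesis
    proof (cases "i = j")
      case True
      then show ?thesis using P1[OF ij(2)] by (simp add: ycoef_def power2_eq_square)
    next
      case False
      then have "i < j" using ij by simp
      have "(\<Sum>m<n. q m * ycoef (rt m) i j) = 2 * (\<Sum>m<n. q m * (rt m i * rt m j))"
        using False by (simp add: ycoef_def sum_distrib_left algebra_simps)
      then show ?thesis using P2[OF \<open>i < j\<close> ij(2)] by simp
    qed
  qed
  have W1: "(\<Sum>m<n. w m) = 1"
  proof -
    have "(\<Sum>m<n. w m) = (\<Sum>m<n. \<Sum>(i, j)\<in>DS_pairs d. q m * ycoef (rt m) i j)"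
      unfolding w_def ssq by (simp add: sum_distrib_left case_prod_beta)
    also have "\<dots> = (\<Sum>(i, j)\<in>DS_pairs d. \<Sum>m<n. q m * ycoef (rt m) i j)"
      by (subst sum.swap) (simp add: case_prod_beta)
    also have "\<dots> = (\<Sum>(i, j)\<in>DS_pairs d. p i j)"
      by (rule sum.cong[OF refl]) (auto simp: coefp)
    also have "\<dots> = 1" using coef unfolding DS_coeffs_def by blast
    finally show ?thesis .
  qed
  have MW: "(\<Sum>m\<in>M. w m) = 1"
  proof -
    have "(\<Sum>m\<in>M. w m) = (\<Sum>m<n. w m)"
      by (rule sum.mono_neutral_left) (auto simp: M_def dest: w0 intro: order.antisym)
    then show ?thesis using W1 by simp
  qed
  have Mfin: "finite M" unfolding M_def by simp
  have Msub: "M \<subseteq> {..<n}" unfolding M_def by auto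
  have zero_out: "q m * (rt m k * rt m l) = 0" if "m < n" "m \<notin> M" "k < d" "l < d" for m k l
  proof -
    have "w m = 0" using that(1,2) w0[OF that(1)] unfolding M_def by auto
    then have "q m = 0 \<or> s m = 0" unfolding w_def by simp
    then show ?thesis
    proof
      assume "s m = 0"
      then have "\<forall>k\<in>{..<d}. rt m k = 0" unfolding s_def using sum_nonneg_eq_0_iff[OF fin] rt0 by blast
      then show ?thesis using that(3) by simp
    qed simp
  qed
  have inM: "m < n" "0 < q m" "0 < s m" if "m \<in> M" for m
  proof -
    show "m < n" using that unfolding M_def by simp
    have "0 < q m * (s m)\<^sup>2" using that unfolding M_def w_def by simp
    then have "q m \<noteq> 0" "s m \<noteq> 0" by auto
    then show "0 < q m" "0 < s m" using q0[OF \<open>m < n\<close>] s0[of m] by auto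
  qed
  have wy: "w m * (y m k * y m l) = q m * (rt m k * rt m l)" if "m \<in> M" for m k l
    unfolding w_def y_def using inM(3)[OF that] by (simp add: field_simps power2_eq_square)
  have yS: "Eop d (y m) \<in> sep_DS_states d" if "m \<in> M" for m
  proof -
    have y0: "0 \<le> y m k" for k unfolding y_def using rt0 s0 by simp
    have y1: "(\<Sum>k<d. y m k) = 1" unfolding y_def s_def
      using inM(3)[OF that] by (simp add: sum_divide_distrib[symmetric] s_def)
    show ?thesis unfolding sep_DS_states_def
      using Eop_separable[OF y0 y1] Eop_diag_symmetric[OF y0 y1] by blast
  qed
  have decomp: "DS_op d p = (\<lambda>x x'. \<Sum>m\<in>M. complex_of_real (w m) * Eop d (y m) x x')"
  proof (intro ext)
    fix x x' :: "nat \<times> nat"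
    obtain k l where x: "x = (k, l)" by (cases x)
    obtain r s' where x': "x' = (r, s')" by (cases x')
    show "DS_op d p x x' = (\<Sum>m\<in>M. complex_of_real (w m) * Eop d (y m) x x')"
    proof (cases "k < d \<and> l < d \<and> peq k l r s'")
      case False
      have E0: "Eop d (y m) (k, l) (r, s') = 0" for m unfolding Eop_def by (simp only: split if_not_P[OF False])
      have "DS_op d p (k, l) (r, s') = 0" unfolding DS_entry by (rule if_not_P[OF False])
      then show ?thesis unfolding x x' E0 by simp
    next
      case True
      have "(\<Sum>m\<in>M. complex_of_real (w m) * Eop d (y m) (k, l) (r, s')) =
            (\<Sum>m\<in>M. complex_of_real (q m * (rt m k * rt m l)))"
        by (rule sum.cong[OF refl]) (use True wy in \<open>simp add: Eop_def flip: of_real_mult\<close>)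
      also have "\<dots> = complex_of_real (\<Sum>m\<in>M. q m * (rt m k * rt m l))" by (rule of_real_sum[symmetric])
      also have "(\<Sum>m\<in>M. q m * (rt m k * rt m l)) = (\<Sum>m<n. q m * (rt m k * rt m l))"
        by (rule sum.mono_neutral_left) (use Msub zero_out True in auto)
      also have "\<dots> = (if k = l then p k k else p (min k l) (max k l) / 2)" using P2' True by simp
      finally show ?thesis unfolding x x' DS_entry using True by simp
    qed
  qed
  have "M \<noteq> {}" using MW by auto
  then obtain m0 where m0: "m0 \<in> M" by blast
  have Eeq: "Eop d (y m0) = DS_op d p"
  proof (rule extremal_finite[OF hext _ Mfin m0 _ MW decomp])
    show "\<And>a b t. a \<in> sep_DS_states d \<Longrightarrow> b \<in> sep_DS_states d \<Longrightarrow> 0 \<le> t \<Longrightarrow> t \<le> 1 \<Longrightarrow>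
        (\<lambda>x y. complex_of_real t * a x y + complex_of_real (1 - t) * b x y) \<in> sep_DS_states d"
      by (rule S_convex)
    show "\<forall>m\<in>M. 0 < w m \<and> Eop d (y m) \<in> sep_DS_states d" using yS unfolding M_def by auto
  qed
  show ?thesis
  proof (intro allI impI)
    fix i j assume ij: "i < j \<and> j < d"
    define u where "u = y m0"
    have u0: "0 \<le> u k" for k unfolding u_def y_def using rt0 s0 by simp
    have "complex_of_real (u i * u i) = Eop d u (i, i) (i, i)" using ij by (simp add: Eop_def peq_def)
    also have "\<dots> = complex_of_real (p i i)" unfolding u_def Eeq DS_entry using ij by (simp add: peq_def)
    finally have "u i * u i = p i i" by (simp only: of_real_eq_iff)
    then have pi: "p i i = u i * u i" by (rule sym)
    have "complex_of_real (u j * u j) = Eop d u (j, j) (j, j)" using ij by (simp add: Eop_def peq_def)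
    also have "\<dots> = complex_of_real (p j j)" unfolding u_def Eeq DS_entry using ij by (simp add: peq_def)
    finally have "u j * u j = p j j" by (simp only: of_real_eq_iff)
    then have pj: "p j j = u j * u j" by (rule sym)
    have "complex_of_real (u i * u j) = Eop d u (i, j) (i, j)" using ij by (simp add: Eop_def peq_def)
    also have "\<dots> = complex_of_real (p i j / 2)" unfolding u_def Eeq DS_entry using ij by (simp add: peq_def)
    finally have "u i * u j = p i j / 2" by (simp only: of_real_eq_iff)
    then have pij: "p i j = 2 * (u i * u j)" by simp
    have "sqrt (p i i * p j j) = u i * u j"
    proof -
      have "u i * u i * (u j * u j) = (u i * u j)\<^sup>2" by (simp add: power2_eq_square algebra_simps)
      then have "sqrt (u i * u i * (u j * u j)) = \<bar>u i * u j\<bar>" by (simp only: real_sqrt_abs)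
      then show ?thesis unfolding pi pj using u0[of i] u0[of j] by simp
    qed
    then show "p i j = 2 * sqrt (p i i * p j j)" using pij by simp
  qed
qed



end
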